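(* For every $n\ge4$, the space $\mathrm{CSN}_n$, with the length metric obtained by giving each orthant $O_\pi$ its Euclidean metric and gluing, is not a CAT(0) space.
   Context: $X$ is a set of $n\ge4$ labels. A split of $X$ is an unordered partition of $X$ into two nonempty sets; it is trivial if one part is a singleton. A circular ordering of $X$ is a cyclic arrangement $\pi=(x_1,\dots,x_n)$ up to rotation and reflection; a split is circular w.r.t. $\pi$ if it has the form $\{\{x_{i+1},\dots,x_j\},X\setminus\{x_{i+1},\dots,x_j\}\}$ (indices mod $n$). Let $\delta=2^{n-1}-n-1$ and give $\mathbb R^\delta$ coordinates indexed by nontrivial splits. For each circular ordering $\pi$, $O_\pi\subset\mathbb R^\delta$ is the set of nonnegative vectors whose support consists of splits circular w.r.t. $\pi$ (an orthant of dimension $n(n-3)/2$), and $\mathrm{CSN}_n=\bigcup_\pi O_\pi$. *)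

theory Defs
  imports "HOL-Analysis.Analysis"
begin

definition metric_on :: "'a set \<Rightarrow> ('a \<Rightarrow> 'a \<Rightarrow> real) \<Rightarrow> bool" where
  "metric_on S d \<longleftrightarrow>
     (\<forall>x\<in>S. \<forall>y\<in>S. (d x y = 0 \<longleftrightarrow> x = y) \<and> d x y = d y x) \<and>
     (\<forall>x\<in>S. \<forall>y\<in>S. \<forall>z\<in>S. d x z \<le> d x y + d y z)"

definition geodesic_seg :: "'a set \<Rightarrow> ('a \<Rightarrow> 'a \<Rightarrow> real) \<Rightarrow> (real \<Rightarrow> 'a) \<Rightarrow> 'a \<Rightarrow> 'a \<Rightarrow> bool" where
  "geodesic_seg S d g x y \<longleftrightarrow>
     g 0 = x \<and> g (d x y) = y \<and> (\<forall>s\<in>{0..d x y}. g s \<in> S) \<and>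
     (\<forall>s\<in>{0..d x y}. \<forall>t\<in>{0..d x y}. d (g s) (g t) = \<bar>s - t\<bar>)"

definition geodesic_space :: "'a set \<Rightarrow> ('a \<Rightarrow> 'a \<Rightarrow> real) \<Rightarrow> bool" where
  "geodesic_space S d \<longleftrightarrow> (\<forall>x\<in>S. \<forall>y\<in>S. \<exists>g. geodesic_seg S d g x y)"

definition comp_pt :: "complex \<Rightarrow> complex \<Rightarrow> real \<Rightarrow> real \<Rightarrow> complex" where
  "comp_pt a b l s = (if l = 0 then a else a + of_real (s / l) * (b - a))"

definition CAT0 :: "'a set \<Rightarrow> ('a \<Rightarrow> 'a \<Rightarrow> real) \<Rightarrow> bool" where
  "CAT0 S d \<longleftrightarrow> metric_on S d \<and> geodesic_space S d \<and>
    (\<forall>p\<in>S. \<forall>q\<in>S. \<forall>r\<in>S. \<forall>g1 g2 g3.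
       geodesic_seg S d g1 p q \<and> geodesic_seg S d g2 q r \<and> geodesic_seg S d g3 r p \<longrightarrow>
       (\<forall>a b c :: complex. dist a b = d p q \<and> dist b c = d q r \<and> dist c a = d r p \<longrightarrow>
          (\<forall>(g, l, u, v) \<in> set [(g1, d p q, a, b), (g2, d q r, b, c), (g3, d r p, c, a)].
           \<forall>(g', l', u', v') \<in> set [(g1, d p q, a, b), (g2, d q r, b, c), (g3, d r p, c, a)].
           \<forall>s\<in>{0..l}. \<forall>t\<in>{0..l'}.
             d (g s) (g' t) \<le> dist (comp_pt u v l s) (comp_pt u' v' l' t))))"

text \<open>Label set X = {0..<n}. A split is represented as the unordered pair {A, X - A}.\<close>
definition is_split :: "nat \<Rightarrow> nat set set \<Rightarrow> bool" where
  "is_split n P \<longleftrightarrow> (\<exists>A. A \<subseteq> {..<n} \<and> A \<noteq> {} \<and> A \<noteq> {..<n} \<and> P = {A, {..<n} - A})"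

definition nontrivial_split :: "nat \<Rightarrow> nat set set \<Rightarrow> bool" where
  "nontrivial_split n P \<longleftrightarrow> is_split n P \<and> (\<forall>A\<in>P. 2 \<le> card A)"

text \<open>R^delta: real vectors indexed by the nontrivial splits (zero elsewhere).\<close>
definition coord_space :: "nat \<Rightarrow> (nat set set \<Rightarrow> real) set" where
  "coord_space n = {v. \<forall>P. \<not> nontrivial_split n P \<longrightarrow> v P = 0}"

definition eucl_dist :: "nat \<Rightarrow> (nat set set \<Rightarrow> real) \<Rightarrow> (nat set set \<Rightarrow> real) \<Rightarrow> real" where
  "eucl_dist n v w = sqrt (\<Sum>P\<in>{P. nontrivial_split n P}. (v P - w P)^2)"

text \<open>A circular ordering is given by a bijection pi : {0..<n} -> X, read cyclically
  (x_1,...,x_n) = (pi 0, ..., pi (n-1)).\<close>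
definition circ_ordering :: "nat \<Rightarrow> (nat \<Rightarrow> nat) \<Rightarrow> bool" where
  "circ_ordering n \<pi> \<longleftrightarrow> bij_betw \<pi> {..<n} {..<n}"

text \<open>A split is circular w.r.t. pi iff one of its parts is a cyclic interval of pi;
  since the complement of a wrapping cyclic interval is a non-wrapping one, it suffices
  that one part is a contiguous block pi ` {i..<j}.\<close>
definition circular_split :: "nat \<Rightarrow> (nat \<Rightarrow> nat) \<Rightarrow> nat set set \<Rightarrow> bool" where
  "circular_split n \<pi> P \<longleftrightarrow> is_split n P \<and> (\<exists>i j. i < j \<and> j \<le> n \<and> \<pi> ` {i..<j} \<in> P)"

definition orthant :: "nat \<Rightarrow> (nat \<Rightarrow> nat) \<Rightarrow> (nat set set \<Rightarrow> real) set" where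
  "orthant n \<pi> = {v \<in> coord_space n. (\<forall>P. 0 \<le> v P) \<and> (\<forall>P. v P \<noteq> 0 \<longrightarrow> circular_split n \<pi> P)}"

definition CSN :: "nat \<Rightarrow> (nat set set \<Rightarrow> real) set" where
  "CSN n = (\<Union>\<pi>\<in>{\<pi>. circ_ordering n \<pi>}. orthant n \<pi>)"

text \<open>The glued (quotient length) metric: infimum over chains x = c 0, ..., c k = y with
  consecutive points in a common orthant, of the sum of Euclidean lengths.\<close>
definition csn_dist :: "nat \<Rightarrow> (nat set set \<Rightarrow> real) \<Rightarrow> (nat set set \<Rightarrow> real) \<Rightarrow> real" where
  "csn_dist n x y = Inf {(\<Sum>i<k. eucl_dist n (c i) (c (Suc i))) | k c.
       c 0 = x \<and> c k = y \<and>
       (\<forall>i<k. \<exists>\<pi>. circ_ordering n \<pi> \<and> c i \<in> orthant n \<pi> \<and> c (Suc i) \<in> orthant n \<pi>)}"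

end

theory Submission
  imports Defs
begin


definition e2 :: "nat set set \<Rightarrow> nat set set \<Rightarrow> real \<Rightarrow> real \<Rightarrow> (nat set set \<Rightarrow> real)" where
  "e2 P Q a b = (\<lambda>R. (if R = P then a else 0) + (if R = Q then b else 0))"

definition sp :: "nat \<Rightarrow> nat set \<Rightarrow> nat set set" where "sp n S = {S, {..<n} - S}"

definition chainset :: "nat \<Rightarrow> (nat set set \<Rightarrow> real) \<Rightarrow> (nat set set \<Rightarrow> real) \<Rightarrow> real set" where
  "chainset n x y = {(\<Sum>i<k. eucl_dist n (c i) (c (Suc i))) | k c.
       c 0 = x \<and> c k = y \<and>
       (\<forall>i<k. \<exists>\<pi>. circ_ordering n \<pi> \<and> c i \<in> orthant n \<pi> \<and> c (Suc i) \<in> orthant n \<pi>)}"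

lemma csn_dist_eq: "csn_dist n x y = Inf (chainset n x y)"
  unfolding csn_dist_def chainset_def ..

lemma finite_NS: "finite {R. nontrivial_split n R}"
proof (rule finite_subset[of _ "Pow (Pow {..<n})"])
  show "{R. nontrivial_split n R} \<subseteq> Pow (Pow {..<n})"
    by (auto simp: nontrivial_split_def is_split_def)
qed simp

lemma eucl_ge:
  assumes "T \<subseteq> {R. nontrivial_split n R}"
  shows "sqrt (\<Sum>R\<in>T. (v R - w R)^2) \<le> eucl_dist n v w"
  unfolding eucl_dist_def
  apply (rule real_sqrt_le_mono)
  apply (rule sum_mono2[OF finite_NS assms]) by simp

lemma eucl_e2:
  assumes "nontrivial_split n P" "nontrivial_split n Q" "P \<noteq> Q"
  shows "eucl_dist n (e2 P Q a b) (e2 P Q a' b') = sqrt ((a-a')^2 + (b-b')^2)"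
proof -
  have "(\<Sum>R\<in>{R. nontrivial_split n R}. (e2 P Q a b R - e2 P Q a' b' R)^2)
      = (\<Sum>R\<in>{P,Q}. (e2 P Q a b R - e2 P Q a' b' R)^2)"
    by (rule sum.mono_neutral_right[OF finite_NS]) (auto simp: assms e2_def)
  also have "\<dots> = (a-a')^2 + (b-b')^2" using assms by (simp add: e2_def)
  finally show ?thesis by (simp add: eucl_dist_def)
qed

lemma chain_mem:
  assumes "c 0 = x" "c k = y"
    "\<forall>i<k. \<exists>\<pi>. circ_ordering n \<pi> \<and> c i \<in> orthant n \<pi> \<and> c (Suc i) \<in> orthant n \<pi>"
  shows "(\<Sum>i<k. eucl_dist n (c i) (c (Suc i))) \<in> chainset n x y"
  unfolding chainset_def using assms by blast

lemma chain_bdd: "bdd_below (chainset n x y)"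
  by (rule bdd_belowI[of _ 0]) (auto intro!: sum_nonneg simp: chainset_def eucl_dist_def)

lemma csn_upper:
  assumes "circ_ordering n \<pi>" "x \<in> orthant n \<pi>" "y \<in> orthant n \<pi>"
  shows "csn_dist n x y \<le> eucl_dist n x y"
proof -
  let ?c = "\<lambda>i::nat. if i = 0 then x else y"
  have "(\<Sum>i<1. eucl_dist n (?c i) (?c (Suc i))) \<in> chainset n x y"
    by (rule chain_mem) (use assms in auto)
  then have "csn_dist n x y \<le> (\<Sum>i<1. eucl_dist n (?c i) (?c (Suc i)))"
    unfolding csn_dist_eq by (rule cInf_lower[OF _ chain_bdd])
  thus ?thesis by simp
qed

lemma ne1:
  assumes "circ_ordering n \<pi>" "x \<in> orthant n \<pi>" "y \<in> orthant n \<pi>"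
  shows "chainset n x y \<noteq> {}"
proof -
  let ?c = "\<lambda>i::nat. if i = 0 then x else y"
  have "(\<Sum>i<1. eucl_dist n (?c i) (?c (Suc i))) \<in> chainset n x y"
    by (rule chain_mem) (use assms in auto)
  thus ?thesis by blast
qed

lemma ne2:
  assumes "circ_ordering n \<pi>" "x \<in> orthant n \<pi>" "z \<in> orthant n \<pi>"
    "circ_ordering n \<pi>'" "z \<in> orthant n \<pi>'" "y \<in> orthant n \<pi>'"
  shows "chainset n x y \<noteq> {}"
proof -
  let ?c = "\<lambda>i::nat. if i = 0 then x else if i = 1 then z else y"
  have "(\<Sum>i<2. eucl_dist n (?c i) (?c (Suc i))) \<in> chainset n x y"
  proof (rule chain_mem)
    show "\<forall>i<2. \<exists>\<pi>. circ_ordering n \<pi> \<and> ?c i \<in> orthant n \<pi> \<and> ?c (Suc i) \<in> orthant n \<pi>"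
    proof (intro allI impI)
      fix i :: nat assume "i < 2"
      then consider "i = 0" | "i = 1" by linarith
      then show "\<exists>\<pi>. circ_ordering n \<pi> \<and> ?c i \<in> orthant n \<pi> \<and> ?c (Suc i) \<in> orthant n \<pi>"
        by cases (use assms in auto)
    qed
  qed auto
  thus ?thesis by blast
qed

lemma csn_lower:
  assumes HF: "\<And>v w \<pi>. circ_ordering n \<pi> \<Longrightarrow> v \<in> orthant n \<pi> \<Longrightarrow> w \<in> orthant n \<pi> \<Longrightarrow> F v - F w \<le> eucl_dist n v w"
  and ne: "chainset n x y \<noteq> {}"
  shows "F x - F y \<le> csn_dist n x y"
proof -
  have chain: "F (c 0) - F (c k) \<le> (\<Sum>i<k. eucl_dist n (c i) (c (Suc i)))"
    if "\<forall>i<k. \<exists>\<pi>. circ_ordering n \<pi> \<and> c i \<in> orthant n \<pi> \<and> c (Suc i) \<in> orthant n \<pi>" for k c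
    using that
  proof (induction k)
    case 0 then show ?case by simp
  next
    case (Suc k)
    from Suc.prems obtain \<pi> where "circ_ordering n \<pi>" "c k \<in> orthant n \<pi>" "c (Suc k) \<in> orthant n \<pi>" by blast
    then have "F (c k) - F (c (Suc k)) \<le> eucl_dist n (c k) (c (Suc k))" by (rule HF)
    moreover have "F (c 0) - F (c k) \<le> (\<Sum>i<k. eucl_dist n (c i) (c (Suc i)))" using Suc by auto
    ultimately show ?case by simp
  qed
  show ?thesis unfolding csn_dist_eq
  proof (rule cInf_greatest[OF ne])
    fix z assume "z \<in> chainset n x y"
    then obtain k c where "z = (\<Sum>i<k. eucl_dist n (c i) (c (Suc i)))" "c 0 = x" "c k = y"
      "\<forall>i<k. \<exists>\<pi>. circ_ordering n \<pi> \<and> c i \<in> orthant n \<pi> \<and> c (Suc i) \<in> orthant n \<pi>"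
      unfolding chainset_def by blast
    then show "F x - F y \<le> z" using chain by blast
  qed
qed

lemma orth_e2:
  assumes "nontrivial_split n P" "nontrivial_split n Q" "circular_split n \<pi> P" "circular_split n \<pi> Q"
    "0 \<le> a" "0 \<le> b"
  shows "e2 P Q a b \<in> orthant n \<pi>"
  using assms unfolding orthant_def coord_space_def e2_def by auto

lemma e2_swap: "e2 P Q 0 b = e2 Q R b 0"
  by (simp add: e2_def fun_eq_iff)

lemma sqrt_ineq: "(y - x) / sqrt 2 \<le> sqrt (x^2 + y^2)"
proof (rule real_le_rsqrt)
  have "((y - x) / sqrt 2)^2 = (y-x)^2 / 2" by (simp add: power_divide)
  also have "\<dots> \<le> x^2 + y^2" using sum_squares_ge_zero[of "x+y" 0]
    by (simp add: power2_eq_square algebra_simps)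
  finally show "((y - x) / sqrt 2)^2 \<le> x^2 + y^2" .
qed

lemma tri2: "sqrt (a^2+b^2) - sqrt (c^2+d^2) \<le> sqrt ((a-c)^2+(b-d)^2)"
  using norm_triangle_ineq2[of "Complex a b" "Complex c d"] by (simp add: complex_norm complex_diff)



lemma eucl_sym: "eucl_dist n v w = eucl_dist n w v"
  unfolding eucl_dist_def by (simp add: power2_commute)

lemma caseA:
  assumes K: "\<forall>k<n. (i \<le> k \<and> k < j) \<longleftrightarrow> (k = pu \<or> k = pv)" and ij: "i < j" "j \<le> n" and pu: "pu < n" "pv < (n::nat)" "pu \<noteq> pv"
  shows "pu = Suc pv \<or> pv = Suc pu \<or> (pu = 0 \<and> pv = n - 1) \<or> (pv = 0 \<and> pu = n - 1)"
proof -
  have a: "i \<le> pu" "pu < j" "i \<le> pv" "pv < j" using K[rule_format, of pu] K[rule_format, of pv] pu by auto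
  have b: "i = pu \<or> i = pv" using K[rule_format, of i] ij pu a by auto
  have c: "Suc i < j \<Longrightarrow> Suc i = pu \<or> Suc i = pv" using K[rule_format, of "Suc i"] ij by auto
  from b show ?thesis
  proof
    assume h: "i = pu"
    then have "Suc i \<le> pv" using a(3) pu(3) by linarith
    then have "Suc i < j" using a(4) by linarith
    then have "Suc i = pv" using c h by auto
    then show ?thesis using h by blast
  next
    assume h: "i = pv"
    then have "Suc i \<le> pu" using a(1) pu(3) by linarith
    then have "Suc i < j" using a(2) by linarith
    then have "Suc i = pu" using c h by auto
    then show ?thesis using h by blast
  qed
qed
lemma caseB:
  assumes K: "\<forall>k<n. (i \<le> k \<and> k < j) \<longleftrightarrow> \<not>(k = pu \<or> k = pv)" and ij: "i < j" "j \<le> n" and pu: "pu < n" "pv < (n::nat)" "pu \<noteq> pv" and n: "4 \<le> n"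
  shows "pu = Suc pv \<or> pv = Suc pu \<or> (pu = 0 \<and> pv = n - 1) \<or> (pv = 0 \<and> pu = n - 1)"
proof -
  have o: "pu < i \<or> j \<le> pu" "pv < i \<or> j \<le> pv" using K[rule_format, of pu] K[rule_format, of pv] pu by auto
  have k0: "0 < i \<Longrightarrow> 0 = pu \<or> 0 = pv" using K[rule_format, of 0] n by auto
  have k1: "1 < i \<Longrightarrow> 1 = pu \<or> 1 = pv" using K[rule_format, of 1] n ij by auto
  have k2: "j < n \<Longrightarrow> n - 1 = pu \<or> n - 1 = pv" using K[rule_format, of "n-1"] n ij by auto
  have k3: "j < n - 1 \<Longrightarrow> n - 2 = pu \<or> n - 2 = pv" using K[rule_format, of "n-2"] n ij by auto
  consider "2 \<le> i" | "i = 1" | "i = 0" by linarith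
  then show ?thesis
  proof cases
    case 1
    then have "0 = pu \<or> 0 = pv" "1 = pu \<or> 1 = pv" using k0 k1 by auto
    then show ?thesis using pu(3) by auto
  next
    case 2
    then have z: "0 = pu \<or> 0 = pv" using k0 by auto
    have "j < n"
    proof (rule ccontr)
      assume "\<not> j < n" then have jn: "j = n" using ij by linarith
      have "pu < 1" using o(1) jn pu(1) 2 by auto
      moreover have "pv < 1" using o(2) jn pu(2) 2 by auto
      ultimately
      show False using pu(3) by linarith
    qed
    then have "n - 1 = pu \<or> n - 1 = pv" by (rule k2)
    then show ?thesis using z pu n by auto
  next
    case 3
    have "j < n - 1"
    proof (rule ccontr)
      assume "\<not> j < n - 1"
      then have "n - 1 \<le> pu" "n - 1 \<le> pv" using o 3 by auto
      then show False using pu by linarith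
    qed
    then have "n - 1 = pu \<or> n - 1 = pv" "n - 2 = pu \<or> n - 2 = pv" using k2 k3 by auto
    then show ?thesis using pu(3) n by auto
  qed
qed
lemma adj_pos:
  assumes bij: "bij_betw \<pi> {..<n} {..<n}" and n: "4 \<le> n" and pu: "pu < n" "pv < n" "pu \<noteq> pv"
   and ij: "i < j" "j \<le> n" and im: "\<pi> ` {i..<j} \<in> {{\<pi> pu, \<pi> pv}, {..<n} - {\<pi> pu, \<pi> pv}}"
  shows "pu = Suc pv \<or> pv = Suc pu \<or> (pu = 0 \<and> pv = n - 1) \<or> (pv = 0 \<and> pu = n - 1)"
proof -
  have inj: "inj_on \<pi> {..<n}" using bij by (simp add: bij_betw_def)
  have mem: "\<pi> k \<in> \<pi> ` {i..<j} \<longleftrightarrow> (i \<le> k \<and> k < j)" if "k < n" for k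
  proof -
    have sub: "{i..<j} \<subseteq> {..<n}" using ij by auto
    show ?thesis using inj_on_image_mem_iff[OF inj _ sub, of k] that by auto
  qed
  have mem2: "\<pi> k \<in> {\<pi> pu, \<pi> pv} \<longleftrightarrow> (k = pu \<or> k = pv)" if "k < n" for k
    using that pu by (auto simp: inj_on_eq_iff[OF inj])
  have rng: "\<pi> k \<in> {..<n}" if "k<n" for k using bij that by (auto simp: bij_betw_def)
  from im consider (a) "\<pi>`{i..<j} = {\<pi> pu, \<pi> pv}" | (b) "\<pi>`{i..<j} = {..<n} - {\<pi> pu, \<pi> pv}" by blast
  then have key: "(\<forall>k<n. (i \<le> k \<and> k < j) \<longleftrightarrow> (k = pu \<or> k = pv)) \<or> (\<forall>k<n. (i \<le> k \<and> k < j) \<longleftrightarrow> \<not>(k = pu \<or> k = pv))"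
  proof cases
    case a
    have "\<forall>k<n. (i \<le> k \<and> k < j) \<longleftrightarrow> (k = pu \<or> k = pv)"
    proof (intro allI impI)
      fix k assume k: "k < n"
      show "(i \<le> k \<and> k < j) \<longleftrightarrow> (k = pu \<or> k = pv)" using mem[OF k] mem2[OF k] a by simp
    qed
    then show ?thesis by blast
  next
    case b
    have "\<forall>k<n. (i \<le> k \<and> k < j) \<longleftrightarrow> \<not>(k = pu \<or> k = pv)"
    proof (intro allI impI)
      fix k assume k: "k < n"
      show "(i \<le> k \<and> k < j) \<longleftrightarrow> \<not>(k = pu \<or> k = pv)" using mem[OF k] mem2[OF k] rng[OF k] b by auto
    qed
    then show ?thesis by blast
  qed
  then show ?thesis
    using caseA[OF _ ij pu] caseB[OF _ ij pu n] by blast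
qed

lemma pos_exists:
  assumes "bij_betw \<pi> {..<n} {..<n}" "u < n"
  obtains p where "p < n" "\<pi> p = u"
proof -
  have "\<pi> ` {..<n} = {..<n}" using assms(1) by (simp add: bij_betw_def)
  then have "u \<in> \<pi> ` {..<n}" using assms(2) by simp
  then obtain p where "p \<in> {..<n}" "u = \<pi> p" by (rule imageE)
  then show ?thesis using that by simp
qed

lemma no3:
  assumes co: "circ_ordering n \<pi>" and n: "4 \<le> n"
  shows "\<not> (circular_split n \<pi> (sp n {0,1}) \<and> circular_split n \<pi> (sp n {1,2}) \<and> circular_split n \<pi> (sp n {0,2}))"
proof
  assume H: "circular_split n \<pi> (sp n {0,1}) \<and> circular_split n \<pi> (sp n {1,2}) \<and> circular_split n \<pi> (sp n {0,2})"
  have bij: "bij_betw \<pi> {..<n} {..<n}" using co by (simp add: circ_ordering_def)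
  obtain p0 where p0: "p0 < n" "\<pi> p0 = 0" using pos_exists[OF bij, of 0] n by auto
  obtain p1 where p1: "p1 < n" "\<pi> p1 = 1" using pos_exists[OF bij, of 1] n by auto
  obtain p2 where p2: "p2 < n" "\<pi> p2 = 2" using pos_exists[OF bij, of 2] n by auto
  have d: "p0 \<noteq> p1" "p1 \<noteq> p2" "p0 \<noteq> p2" using p0 p1 p2 by auto
  have A: "pu = Suc pv \<or> pv = Suc pu \<or> (pu = 0 \<and> pv = n - 1) \<or> (pv = 0 \<and> pu = n - 1)"
    if "circular_split n \<pi> (sp n {\<pi> pu, \<pi> pv})" "pu < n" "pv < n" "pu \<noteq> pv" for pu pv
  proof -
    from that(1) obtain i j where "i < j" "j \<le> n" "\<pi> ` {i..<j} \<in> sp n {\<pi> pu, \<pi> pv}"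
      unfolding circular_split_def by blast
    then show ?thesis using adj_pos[OF bij n that(2-4)] by (simp add: sp_def)
  qed
  have a1: "p0 = Suc p1 \<or> p1 = Suc p0 \<or> (p0 = 0 \<and> p1 = n - 1) \<or> (p1 = 0 \<and> p0 = n - 1)"
    using A[of p0 p1] H p0 p1 d by simp
  have a2: "p1 = Suc p2 \<or> p2 = Suc p1 \<or> (p1 = 0 \<and> p2 = n - 1) \<or> (p2 = 0 \<and> p1 = n - 1)"
    using A[of p1 p2] H p1 p2 d by simp
  have a3: "p0 = Suc p2 \<or> p2 = Suc p0 \<or> (p0 = 0 \<and> p2 = n - 1) \<or> (p2 = 0 \<and> p0 = n - 1)"
    using A[of p0 p2] H p0 p2 d by simp
  show False using a1 a2 a3 d n by (elim disjE conjE) linarith+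
qed



lemma seg:
  assumes P: "nontrivial_split n P" and Q: "nontrivial_split n Q" and PQ: "P \<noteq> Q"
    and co: "circ_ordering n \<pi>" and cP: "circular_split n \<pi> P" and cQ: "circular_split n \<pi> Q"
    and g: "g = (\<lambda>s. e2 P Q (1 - s / sqrt 2) (s / sqrt 2))"
  shows "csn_dist n (g 0) (g (sqrt 2)) = sqrt 2" "geodesic_seg (CSN n) (csn_dist n) g (g 0) (g (sqrt 2))"
proof -
  have orth: "g s \<in> orthant n \<pi>" if "s \<in> {0..sqrt 2}" for s
    unfolding g using that by (intro orth_e2[OF P Q cP cQ]) auto
  have CSN: "g s \<in> CSN n" if "s \<in> {0..sqrt 2}" for s
    using orth[OF that] co unfolding CSN_def by blast
  define F where "F = (\<lambda>v::nat set set \<Rightarrow> real. (v Q - v P) / sqrt 2)"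
  have HF: "F v - F w \<le> eucl_dist n v w" for v w
  proof -
    have "F v - F w = ((v Q - w Q) - (v P - w P)) / sqrt 2" by (simp add: F_def diff_divide_distrib)
    also have "\<dots> \<le> sqrt ((v P - w P)^2 + (v Q - w Q)^2)" by (rule sqrt_ineq)
    also have "\<dots> = sqrt (\<Sum>R\<in>{P,Q}. (v R - w R)^2)" using PQ by simp
    also have "\<dots> \<le> eucl_dist n v w" by (rule eucl_ge) (use P Q in auto)
    finally show ?thesis .
  qed
  have HF': "(- F v) - (- F w) \<le> eucl_dist n v w" for v w
    using HF[of w v] eucl_sym[of n w v] by simp
  have Fg: "F (g s) = s - 1 / sqrt 2" for s
    using PQ by (simp add: F_def g e2_def field_simps)
  have D: "csn_dist n (g s) (g t) = \<bar>s - t\<bar>" if s: "s \<in> {0..sqrt 2}" and t: "t \<in> {0..sqrt 2}" for s t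
  proof (rule antisym)
    have "csn_dist n (g s) (g t) \<le> eucl_dist n (g s) (g t)" by (rule csn_upper[OF co orth[OF s] orth[OF t]])
    also have "\<dots> = sqrt ((1 - s / sqrt 2 - (1 - t / sqrt 2))^2 + (s / sqrt 2 - t / sqrt 2)^2)"
      unfolding g by (rule eucl_e2[OF P Q PQ])
    also have "(1 - s / sqrt 2 - (1 - t / sqrt 2))^2 + (s / sqrt 2 - t / sqrt 2)^2 = (s - t)^2"
      by (simp add: power2_eq_square field_simps)
    finally show "csn_dist n (g s) (g t) \<le> \<bar>s - t\<bar>" by simp
  next
    have ne: "chainset n (g x) (g y) \<noteq> {}" if "x \<in> {0..sqrt 2}" "y \<in> {0..sqrt 2}" for x y
      by (rule ne1[OF co orth[OF that(1)] orth[OF that(2)]])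
    have "F (g s) - F (g t) \<le> csn_dist n (g s) (g t)"
      by (rule csn_lower[OF _ ne[OF s t]]) (rule HF)
    moreover have "(- F (g s)) - (- F (g t)) \<le> csn_dist n (g s) (g t)"
      by (rule csn_lower[OF _ ne[OF s t]]) (rule HF')
    ultimately show "\<bar>s - t\<bar> \<le> csn_dist n (g s) (g t)" using Fg by (simp add: abs_le_iff)
  qed
  show d: "csn_dist n (g 0) (g (sqrt 2)) = sqrt 2" using D[of 0 "sqrt 2"] by simp
  show "geodesic_seg (CSN n) (csn_dist n) g (g 0) (g (sqrt 2))"
    unfolding geodesic_seg_def d using D CSN by auto
qed



lemma tri2': "sqrt (a^2+b^2) - sqrt (c^2+d^2) \<le> sqrt ((a-c)^2+(b-d)^2)"
  using norm_triangle_ineq2[of "Complex a b" "Complex c d"] by (simp add: complex_norm complex_diff)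

lemma lip3:
  fixes x y z x' y' z' :: real
  defines "F \<equiv> \<lambda>x y z::real. sqrt((x+1/2)^2 + (y-1/2)^2 + (z-1/2)^2 - 1/4)"
  assumes "(z = 0 \<and> z' = 0) \<or> (x = 0 \<and> x' = 0) \<or> (y = 0 \<and> y' = 0)"
  shows "F x y z - F x' y' z' \<le> sqrt((x-x')^2+(y-y')^2+(z-z')^2)"
  using assms(2)
proof (elim disjE conjE)
  assume h: "z = 0" "z' = 0"
  have "F x y z - F x' y' z' = sqrt((x+1/2)^2 + (y-1/2)^2) - sqrt((x'+1/2)^2 + (y'-1/2)^2)"
    using h by (simp add: F_def power2_eq_square)
  also have "\<dots> \<le> sqrt(((x+1/2)-(x'+1/2))^2 + ((y-1/2)-(y'-1/2))^2)" by (rule tri2')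
  also have "\<dots> = sqrt((x-x')^2+(y-y')^2+(z-z')^2)" using h by simp
  finally show ?thesis .
next
  assume h: "x = 0" "x' = 0"
  have "F x y z - F x' y' z' = sqrt((y-1/2)^2 + (z-1/2)^2) - sqrt((y'-1/2)^2 + (z'-1/2)^2)"
    using h by (simp add: F_def power2_eq_square)
  also have "\<dots> \<le> sqrt(((y-1/2)-(y'-1/2))^2 + ((z-1/2)-(z'-1/2))^2)" by (rule tri2')
  also have "\<dots> = sqrt((x-x')^2+(y-y')^2+(z-z')^2)" using h by simp
  finally show ?thesis .
next
  assume h: "y = 0" "y' = 0"
  have "F x y z - F x' y' z' = sqrt((x+1/2)^2 + (z-1/2)^2) - sqrt((x'+1/2)^2 + (z'-1/2)^2)"
    using h by (simp add: F_def power2_eq_square)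
  also have "\<dots> \<le> sqrt(((x+1/2)-(x'+1/2))^2 + ((z-1/2)-(z'-1/2))^2)" by (rule tri2')
  also have "\<dots> = sqrt((x-x')^2+(y-y')^2+(z-z')^2)" using h by simp
  finally show ?thesis .
qed

lemma ntriv:
  assumes "u < n" "v < n" "u \<noteq> v" "4 \<le> n"
  shows "nontrivial_split n (sp n {u,v})"
proof -
  have c1: "card {u,v} = 2" using assms by simp
  have sub: "{u,v} \<subseteq> {..<n}" using assms by auto
  have c2: "card ({..<n} - {u,v}) = n - 2" using card_Diff_subset[OF _ sub] c1 by simp
  have ne: "{u,v} \<noteq> {..<n}"
  proof
    assume "{u,v} = {..<n}"
    then have "card {..<n} = 2" using c1 by simp
    then show False using assms by simp
  qed
  show ?thesis unfolding nontrivial_split_def is_split_def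
  proof (intro conjI ballI)
    show "\<exists>A. A \<subseteq> {..<n} \<and> A \<noteq> {} \<and> A \<noteq> {..<n} \<and> sp n {u,v} = {A, {..<n} - A}"
      using sub ne by (intro exI[of _ "{u,v}"]) (simp add: sp_def)
    fix A assume "A \<in> sp n {u,v}"
    then have "A = {u,v} \<or> A = {..<n} - {u,v}" by (simp add: sp_def)
    then show "2 \<le> card A" using c1 c2 assms by auto
  qed
qed

lemma sp_ne: "x \<in> S \<Longrightarrow> x \<notin> T \<Longrightarrow> y \<in> S \<Longrightarrow> y \<in> T \<Longrightarrow> sp n S \<noteq> sp n T"
proof
  assume a: "x \<in> S" "x \<notin> T" "y \<in> S" "y \<in> T" and e: "sp n S = sp n T"
  have "S \<in> sp n S" by (simp add: sp_def)
  then have "S \<in> sp n T" using e by simp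
  then have "S = T \<or> S = {..<n} - T" by (simp add: sp_def)
  then show False using a by auto
qed

lemma circ_of: "nontrivial_split n (sp n S) \<Longrightarrow> i < j \<Longrightarrow> j \<le> n \<Longrightarrow> \<pi> ` {i..<j} = S \<Longrightarrow> circular_split n \<pi> (sp n S)"
  unfolding circular_split_def nontrivial_split_def by (auto simp: sp_def)

lemma comp_mid: "comp_pt u v (sqrt 2) (sqrt 2 / 2) = (u + v) / 2"
  by (simp add: comp_pt_def field_simps)

lemma dist_mid: "dist (((a::complex)+b)/2) ((b+c)/2) = dist c a / 2"
proof -
  have eq: "(a+b)/2 - (b+c)/2 = (a - c)/2" by (simp add: field_simps)
  show ?thesis unfolding dist_norm eq by (simp add: norm_divide norm_minus_commute)
qed

theorem proposition6:
  fixes n :: nat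
  assumes "4 \<le> n"
  shows "\<not> CAT0 (CSN n) (csn_dist n)"
proof
  assume cat: "CAT0 (CSN n) (csn_dist n)"
  define A where "A = sp n {0,1}"
  define B where "B = sp n {1,2}"
  define C where "C = sp n {0,2}"
  have nA: "nontrivial_split n A" unfolding A_def by (rule ntriv) (use assms in auto)
  have nB: "nontrivial_split n B" unfolding B_def by (rule ntriv) (use assms in auto)
  have nC: "nontrivial_split n C" unfolding C_def by (rule ntriv) (use assms in auto)
  have AB: "A \<noteq> B" unfolding A_def B_def by (rule sp_ne[of 0 _ _ 1]) auto
  have AC: "A \<noteq> C" unfolding A_def C_def by (rule sp_ne[of 1 _ _ 0]) auto
  have BC: "B \<noteq> C" unfolding B_def C_def by (rule sp_ne[of 1 _ _ 2]) auto
  define \<pi>2 where "\<pi>2 = (\<lambda>k::nat. if k = 0 then 1 else if k = 1 then 2 else if k = 2 then 0 else k)"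
  define \<pi>3 where "\<pi>3 = (\<lambda>k::nat. if k = 0 then 2 else if k = 1 then 0 else if k = 2 then 1 else k)"
  have co1: "circ_ordering n id" by (simp add: circ_ordering_def)
  have co2: "circ_ordering n \<pi>2" unfolding circ_ordering_def
    by (rule bij_betw_byWitness[where f'=\<pi>3]) (use assms in \<open>auto simp: \<pi>2_def \<pi>3_def\<close>)
  have co3: "circ_ordering n \<pi>3" unfolding circ_ordering_def
    by (rule bij_betw_byWitness[where f'=\<pi>2]) (use assms in \<open>auto simp: \<pi>2_def \<pi>3_def\<close>)
  have r01: "{0..<2::nat} = {0,1}" and r12: "{1..<3::nat} = {1,2}" by auto
  have cA1: "circular_split n id A" unfolding A_def
    by (rule circ_of[of _ _ 0 2]) (use nA assms r01 in \<open>auto simp: A_def\<close>)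
  have cB1: "circular_split n id B" unfolding B_def
    by (rule circ_of[of _ _ 1 3]) (use nB assms r12 in \<open>auto simp: B_def\<close>)
  have cB2: "circular_split n \<pi>2 B" unfolding B_def
    by (rule circ_of[of _ _ 0 2]) (use nB assms r01 in \<open>auto simp: B_def \<pi>2_def\<close>)
  have cC2: "circular_split n \<pi>2 C" unfolding C_def
    by (rule circ_of[of _ _ 1 3]) (use nC assms r12 in \<open>auto simp: C_def \<pi>2_def\<close>)
  have cC3: "circular_split n \<pi>3 C" unfolding C_def
    by (rule circ_of[of _ _ 0 2]) (use nC assms r01 in \<open>auto simp: C_def \<pi>3_def\<close>)
  have cA3: "circular_split n \<pi>3 A" unfolding A_def
    by (rule circ_of[of _ _ 1 3]) (use nA assms r12 in \<open>auto simp: A_def \<pi>3_def\<close>)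
  define g1 where "g1 = (\<lambda>s. e2 A B (1 - s / sqrt 2) (s / sqrt 2))"
  define g2 where "g2 = (\<lambda>s. e2 B C (1 - s / sqrt 2) (s / sqrt 2))"
  define g3 where "g3 = (\<lambda>s. e2 C A (1 - s / sqrt 2) (s / sqrt 2))"
  note s1 = seg[OF nA nB AB co1 cA1 cB1 g1_def]
  note s2 = seg[OF nB nC BC co2 cB2 cC2 g2_def]
  note s3 = seg[OF nC nA AC[symmetric] co3 cC3 cA3 g3_def]
  have e1: "g1 (sqrt 2) = g2 0" unfolding g1_def g2_def by (simp add: e2_swap[where R=C])
  have e2: "g2 (sqrt 2) = g3 0" unfolding g2_def g3_def by (simp add: e2_swap[where R=A])
  have e3: "g3 (sqrt 2) = g1 0" unfolding g3_def g1_def by (simp add: e2_swap[where R=B])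
  define p where "p = g1 0"
  define q where "q = g2 0"
  define r where "r = g3 0"
  have dpq: "csn_dist n p q = sqrt 2" using s1(1) e1 p_def q_def by simp
  have dqr: "csn_dist n q r = sqrt 2" using s2(1) e2 q_def r_def by simp
  have drp: "csn_dist n r p = sqrt 2" using s3(1) e3 r_def p_def by simp
  have geo1: "geodesic_seg (CSN n) (csn_dist n) g1 p q" using s1(2) e1 p_def q_def by simp
  have geo2: "geodesic_seg (CSN n) (csn_dist n) g2 q r" using s2(2) e2 q_def r_def by simp
  have geo3: "geodesic_seg (CSN n) (csn_dist n) g3 r p" using s3(2) e3 r_def p_def by simp
  have pC: "p \<in> CSN n" using geo1 unfolding geodesic_seg_def by (metis atLeastAtMost_iff dpq order_refl real_sqrt_ge_zero zero_le_numeral)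
  have qC: "q \<in> CSN n" using geo2 unfolding geodesic_seg_def by (metis atLeastAtMost_iff dqr order_refl real_sqrt_ge_zero zero_le_numeral)
  have rC: "r \<in> CSN n" using geo3 unfolding geodesic_seg_def by (metis atLeastAtMost_iff drp order_refl real_sqrt_ge_zero zero_le_numeral)
  define a :: complex where "a = Complex 0 0"
  define b :: complex where "b = Complex (sqrt 2) 0"
  define c :: complex where "c = Complex (sqrt 2 / 2) (sqrt 6 / 2)"
  have dab: "dist a b = csn_dist n p q" unfolding dpq a_def b_def
    by (simp add: dist_norm complex_diff complex_norm)
  have dbc: "dist b c = csn_dist n q r" unfolding dqr b_def c_def
    by (simp add: dist_norm complex_diff complex_norm power2_eq_square field_simps)
  have dca: "dist c a = csn_dist n r p" unfolding drp c_def a_def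
    by (simp add: dist_norm complex_diff complex_norm power2_eq_square field_simps)
  note H0 = cat[unfolded CAT0_def, THEN conjunct2, THEN conjunct2]
  note H1 = H0[THEN bspec, OF pC, THEN bspec, OF qC, THEN bspec, OF rC,
     THEN spec[where x=g1], THEN spec[where x=g2], THEN spec[where x=g3], THEN mp, OF conjI[OF geo1 conjI[OF geo2 geo3]],
     THEN spec[where x=a], THEN spec[where x=b], THEN spec[where x=c], THEN mp, OF conjI[OF dab conjI[OF dbc dca]]]
  have hs: "sqrt 2 / 2 \<in> {0..sqrt 2}" by simp
  have H2: "csn_dist n (g1 (sqrt 2 / 2)) (g2 (sqrt 2 / 2)) \<le> dist (comp_pt a b (sqrt 2) (sqrt 2 / 2)) (comp_pt b c (sqrt 2) (sqrt 2 / 2))"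
    using H1 hs unfolding dpq dqr drp by simp
  have rhs: "dist (comp_pt a b (sqrt 2) (sqrt 2 / 2)) (comp_pt b c (sqrt 2) (sqrt 2 / 2)) = sqrt 2 / 2"
    unfolding comp_mid dist_mid dca drp ..
  have m1: "g1 (sqrt 2 / 2) = e2 A B (1/2) (1/2)" unfolding g1_def by simp
  have m2: "g2 (sqrt 2 / 2) = e2 B C (1/2) (1/2)" unfolding g2_def by simp
  define F where "F = (\<lambda>v::nat set set \<Rightarrow> real. sqrt((v A + 1/2)^2 + (v B - 1/2)^2 + (v C - 1/2)^2 - 1/4))"
  have HF: "F v - F w \<le> eucl_dist n v w" if co: "circ_ordering n \<pi>" and v: "v \<in> orthant n \<pi>" and w: "w \<in> orthant n \<pi>" for v w \<pi>
  proof -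
    have "\<not> circular_split n \<pi> C \<or> \<not> circular_split n \<pi> A \<or> \<not> circular_split n \<pi> B"
      using no3[OF co assms] unfolding A_def B_def C_def by blast
    moreover have "\<not> circular_split n \<pi> X \<Longrightarrow> v X = 0 \<and> w X = 0" for X
      using v w unfolding orthant_def by blast
    ultimately have "(v C = 0 \<and> w C = 0) \<or> (v A = 0 \<and> w A = 0) \<or> (v B = 0 \<and> w B = 0)" by blast
    then have "F v - F w \<le> sqrt((v A - w A)^2+(v B - w B)^2+(v C - w C)^2)"
      unfolding F_def by (rule lip3[unfolded Let_def])
    also have "\<dots> = sqrt (\<Sum>R\<in>{A,B,C}. (v R - w R)^2)" using AB AC BC by (simp add: add.assoc)
    also have "\<dots> \<le> eucl_dist n v w" by (rule eucl_ge) (use nA nB nC in auto)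
    finally show ?thesis .
  qed
  have o1: "e2 A B (1/2) (1/2) \<in> orthant n id" by (rule orth_e2) (use nA nB cA1 cB1 in auto)
  have o2: "e2 A B 0 (1/2) \<in> orthant n id" by (rule orth_e2) (use nA nB cA1 cB1 in auto)
  have o3: "e2 A B 0 (1/2) \<in> orthant n \<pi>2" unfolding e2_swap[where R=C] by (rule orth_e2) (use nB nC cB2 cC2 in auto)
  have o4: "e2 B C (1/2) (1/2) \<in> orthant n \<pi>2" by (rule orth_e2) (use nB nC cB2 cC2 in auto)
  have "F (e2 A B (1/2) (1/2)) - F (e2 B C (1/2) (1/2)) \<le> csn_dist n (e2 A B (1/2) (1/2)) (e2 B C (1/2) (1/2))"
    by (rule csn_lower[OF _ ne2[OF co1 o1 o2 co2 o3 o4]]) (rule HF)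
  moreover have "F (e2 A B (1/2) (1/2)) = 1" using AB AC BC by (simp add: F_def e2_def power2_eq_square)
  moreover have "F (e2 B C (1/2) (1/2)) = 0" using AB AC BC by (simp add: F_def e2_def power2_eq_square)
  ultimately have "1 \<le> csn_dist n (e2 A B (1/2) (1/2)) (e2 B C (1/2) (1/2))" by simp
  moreover have "sqrt 2 < (2::real)" by (smt (verit) real_sqrt_four real_sqrt_less_mono)
  ultimately show False using H2 rhs m1 m2 by simp
qed


end
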